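(* Let $R$ be a commutative Noetherian ring, $M$ a faithful primeful $R$-module having at least one prime submodule, $X=\mathrm{Spec}(M)$, $N$ an $R$-module, $K\le M$, and $U=X\setminus V(K)$. If the ideal $(K:M)$ contains an $N$-sequence of length $2$, then $\mathcal{A}(N,M)(U)\cong N$.
   Context: For a submodule $L$ of an $R$-module $M$, $(L:M)=\{r\in R\mid rM\subseteq L\}$. A submodule $P$ of $M$ is prime if $P\neq M$ and whenever $rm\in P$ ($r\in R$, $m\in M$) then $r\in (P:M)$ or $m\in P$. $\mathrm{Spec}(M)$ is the set of prime submodules. $M$ is faithful if $\mathrm{Ann}_R(M)=0$; primeful if $M=0$ or $\mathrm{Spec}(M)\to\mathrm{Spec}(R/\mathrm{Ann}(M))$, $P\mapsto(P:M)/\mathrm{Ann}(M)$, is surjective. For $L\le M$, $V(L)=\{P\in X\mid (P:M)\supseteq (L:M)\}$; these are the closed sets of the Zariski topology. For open $U\subseteq X$, $\mathrm{Supp}(U)=\{(P:M)\mid P\in U\}$. $\mathcal{A}(N,M)(U)$ is the $R$-module of families $(\gamma_{\mathfrak p})_{\mathfrak p\in\mathrm{Supp}(U)}\in\prod_{\mathfrak p\in\mathrm{Supp}(U)}N_{\mathfrak p}$ such that for each $Q\in U$ there exist an open neighbourhood $W\subseteq U$ of $Q$ and $s\in R$, $m\in N$ with $s\notin(P:M)$ and $\gamma_{(P:M)}=m/s$ for every $P\in W$. A sequence $a_1,\dots,a_n\in R$ is an $N$-sequence if $a_i$ is a non-zero-divisor on $N/(a_1,\dots,a_{i-1})N$ for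 each $i$ and $N/(a_1,\dots,a_n)N\neq0$. *)

theory Defs
  imports Main "HOL.Modules" "HOL-Library.FuncSet"
begin

section \<open>Ring-theoretic notions (R is the whole type 'r)\<close>

definition is_ideal :: "'r::comm_ring_1 set \<Rightarrow> bool" where
  "is_ideal I \<longleftrightarrow> module.subspace ((*) :: 'r \<Rightarrow> 'r \<Rightarrow> 'r) I"

definition is_prime_ideal :: "'r::comm_ring_1 set \<Rightarrow> bool" where
  "is_prime_ideal I \<longleftrightarrow> is_ideal I \<and> I \<noteq> UNIV \<and> (\<forall>a b. a * b \<in> I \<longrightarrow> a \<in> I \<or> b \<in> I)"

definition noetherian_ring :: "'r::comm_ring_1 itself \<Rightarrow> bool" where
  "noetherian_ring _ \<longleftrightarrow>
     (\<forall>I::'r set. is_ideal I \<longrightarrow> (\<exists>F. finite F \<and> I = module.span ((*) :: 'r \<Rightarrow> 'r \<Rightarrow> 'r) F))"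

section \<open>Module-theoretic notions (M is the whole type 'm with scalar multiplication sM)\<close>

definition colon :: "('r::comm_ring_1 \<Rightarrow> 'm::ab_group_add \<Rightarrow> 'm) \<Rightarrow> 'm set \<Rightarrow> 'r set" where
  "colon sM L = {r. \<forall>m. sM r m \<in> L}"

definition ann :: "('r::comm_ring_1 \<Rightarrow> 'm::ab_group_add \<Rightarrow> 'm) \<Rightarrow> 'r set" where
  "ann sM = {r. \<forall>m. sM r m = 0}"

definition faithful :: "('r::comm_ring_1 \<Rightarrow> 'm::ab_group_add \<Rightarrow> 'm) \<Rightarrow> bool" where
  "faithful sM \<longleftrightarrow> ann sM = {0}"

definition prime_submodule :: "('r::comm_ring_1 \<Rightarrow> 'm::ab_group_add \<Rightarrow> 'm) \<Rightarrow> 'm set \<Rightarrow> bool" where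
  "prime_submodule sM P \<longleftrightarrow> module.subspace sM P \<and> P \<noteq> UNIV \<and>
     (\<forall>r m. sM r m \<in> P \<longrightarrow> r \<in> colon sM P \<or> m \<in> P)"

definition mSpec :: "('r::comm_ring_1 \<Rightarrow> 'm::ab_group_add \<Rightarrow> 'm) \<Rightarrow> 'm set set" where
  "mSpec sM = {P. prime_submodule sM P}"

text \<open>Primeful: M = 0, or the map P \<mapsto> (P:M)/Ann(M) from Spec(M) to Spec(R/Ann(M)) is
  surjective; prime ideals of R/Ann(M) correspond to prime ideals of R containing Ann(M).\<close>
definition primeful :: "('r::comm_ring_1 \<Rightarrow> 'm::ab_group_add \<Rightarrow> 'm) \<Rightarrow> bool" where
  "primeful sM \<longleftrightarrow> (UNIV :: 'm set) = {0} \<or>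
     (\<forall>p. is_prime_ideal p \<and> ann sM \<subseteq> p \<longrightarrow> (\<exists>P\<in>mSpec sM. colon sM P = p))"

definition zV :: "('r::comm_ring_1 \<Rightarrow> 'm::ab_group_add \<Rightarrow> 'm) \<Rightarrow> 'm set \<Rightarrow> 'm set set" where
  "zV sM L = {P\<in>mSpec sM. colon sM L \<subseteq> colon sM P}"

definition zopen :: "('r::comm_ring_1 \<Rightarrow> 'm::ab_group_add \<Rightarrow> 'm) \<Rightarrow> 'm set set \<Rightarrow> bool" where
  "zopen sM U \<longleftrightarrow> (\<exists>L. module.subspace sM L \<and> U = mSpec sM - zV sM L)"

definition Supp :: "('r::comm_ring_1 \<Rightarrow> 'm::ab_group_add \<Rightarrow> 'm) \<Rightarrow> 'm set set \<Rightarrow> 'r set set" where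
  "Supp sM U = colon sM ` U"

section \<open>Localization N_p, represented by equivalence classes of pairs (n, s), s \<notin> p\<close>

definition frac :: "('r::comm_ring_1 \<Rightarrow> 'n::ab_group_add \<Rightarrow> 'n) \<Rightarrow> 'r set \<Rightarrow> 'n \<Rightarrow> 'r \<Rightarrow> ('n \<times> 'r) set" where
  "frac sN p n s = {(n', s'). s' \<notin> p \<and> (\<exists>u. u \<notin> p \<and> sN u (sN s' n - sN s n') = 0)}"

definition loc :: "('r::comm_ring_1 \<Rightarrow> 'n::ab_group_add \<Rightarrow> 'n) \<Rightarrow> 'r set \<Rightarrow> ('n \<times> 'r) set set" where
  "loc sN p = {frac sN p n s | n s. s \<notin> p}"

definition loc_add :: "('r::comm_ring_1 \<Rightarrow> 'n::ab_group_add \<Rightarrow> 'n) \<Rightarrow> 'r set \<Rightarrow>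
    ('n \<times> 'r) set \<Rightarrow> ('n \<times> 'r) set \<Rightarrow> ('n \<times> 'r) set" where
  "loc_add sN p c d = (THE e. \<exists>n s n' s'. s \<notin> p \<and> s' \<notin> p \<and> c = frac sN p n s \<and>
      d = frac sN p n' s' \<and> e = frac sN p (sN s' n + sN s n') (s * s'))"

definition loc_smult :: "('r::comm_ring_1 \<Rightarrow> 'n::ab_group_add \<Rightarrow> 'n) \<Rightarrow> 'r set \<Rightarrow>
    'r \<Rightarrow> ('n \<times> 'r) set \<Rightarrow> ('n \<times> 'r) set" where
  "loc_smult sN p r c = (THE e. \<exists>n s. s \<notin> p \<and> c = frac sN p n s \<and> e = frac sN p (sN r n) s)"

definition sections ::
  "('r::comm_ring_1 \<Rightarrow> 'm::ab_group_add \<Rightarrow> 'm) \<Rightarrow> ('r \<Rightarrow> 'n::ab_group_add \<Rightarrow> 'n) \<Rightarrow> 'm set set \<Rightarrow>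
   ('r set \<Rightarrow> ('n \<times> 'r) set) set" where
  "sections sM sN U = {\<gamma> \<in> (\<Pi>\<^sub>E p\<in>Supp sM U. loc sN p).
     \<forall>Q\<in>U. \<exists>W. zopen sM W \<and> W \<subseteq> U \<and> Q \<in> W \<and>
       (\<exists>s n. \<forall>P\<in>W. s \<notin> colon sM P \<and> \<gamma> (colon sM P) = frac sN (colon sM P) n s)}"

definition sec_add :: "('r::comm_ring_1 \<Rightarrow> 'm::ab_group_add \<Rightarrow> 'm) \<Rightarrow> ('r \<Rightarrow> 'n::ab_group_add \<Rightarrow> 'n) \<Rightarrow>
    'm set set \<Rightarrow> ('r set \<Rightarrow> ('n \<times> 'r) set) \<Rightarrow> ('r set \<Rightarrow> ('n \<times> 'r) set) \<Rightarrow> ('r set \<Rightarrow> ('n \<times> 'r) set)" where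
  "sec_add sM sN U \<gamma> \<delta> = (\<lambda>p. if p \<in> Supp sM U then loc_add sN p (\<gamma> p) (\<delta> p) else undefined)"

definition sec_smult :: "('r::comm_ring_1 \<Rightarrow> 'm::ab_group_add \<Rightarrow> 'm) \<Rightarrow> ('r \<Rightarrow> 'n::ab_group_add \<Rightarrow> 'n) \<Rightarrow>
    'm set set \<Rightarrow> 'r \<Rightarrow> ('r set \<Rightarrow> ('n \<times> 'r) set) \<Rightarrow> ('r set \<Rightarrow> ('n \<times> 'r) set)" where
  "sec_smult sM sN U r \<gamma> = (\<lambda>p. if p \<in> Supp sM U then loc_smult sN p r (\<gamma> p) else undefined)"

definition N_sequence2 :: "('r::comm_ring_1 \<Rightarrow> 'n::ab_group_add \<Rightarrow> 'n) \<Rightarrow> 'r \<Rightarrow> 'r \<Rightarrow> bool" where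
  "N_sequence2 sN a1 a2 \<longleftrightarrow>
     (\<forall>x. sN a1 x = 0 \<longrightarrow> x = 0) \<and>
     (\<forall>x. sN a2 x \<in> range (sN a1) \<longrightarrow> x \<in> range (sN a1)) \<and>
     {sN a1 x + sN a2 y | x y. True} \<noteq> UNIV"

end

theory Submission
  imports Defs
begin


interpretation Rm: module "(*) :: 'a::comm_ring_1 \<Rightarrow> 'a \<Rightarrow> 'a"
  by standard (auto simp: algebra_simps)

declare Rm.scale_scale [simp del]

lemma is_ideal_iff: "is_ideal J \<longleftrightarrow> 0 \<in> J \<and> (\<forall>x\<in>J. \<forall>y\<in>J. x+y \<in> J) \<and> (\<forall>c. \<forall>x\<in>J. c*x \<in> J)"
  unfolding is_ideal_def Rm.subspace_def ..

lemma ideal_0: "is_ideal J \<Longrightarrow> 0 \<in> J" by (simp add: is_ideal_iff)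
lemma ideal_add: "is_ideal J \<Longrightarrow> x \<in> J \<Longrightarrow> y \<in> J \<Longrightarrow> x + y \<in> J" by (simp add: is_ideal_iff)
lemma ideal_multL: "is_ideal J \<Longrightarrow> x \<in> J \<Longrightarrow> c * x \<in> J" by (simp add: is_ideal_iff)
lemma ideal_multR: "is_ideal J \<Longrightarrow> x \<in> J \<Longrightarrow> x * c \<in> J" by (metis ideal_multL mult.commute)
lemma ideal_sum: "is_ideal J \<Longrightarrow> (\<And>i. i \<in> t \<Longrightarrow> f i \<in> J) \<Longrightarrow> sum f t \<in> J"
  by (induct t rule: infinite_finite_induct) (auto simp: ideal_0 ideal_add)

lemma prime_ideal_1: "is_prime_ideal p \<Longrightarrow> 1 \<notin> p"
  unfolding is_prime_ideal_def by (metis UNIV_eq_I ideal_multR mult_1)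
lemma prime_mult: "is_prime_ideal p \<Longrightarrow> x \<notin> p \<Longrightarrow> y \<notin> p \<Longrightarrow> x * y \<notin> p"
  unfolding is_prime_ideal_def by blast
lemma prime_pow: "is_prime_ideal p \<Longrightarrow> x \<notin> p \<Longrightarrow> x ^ n \<notin> p"
  by (induct n) (auto simp: prime_ideal_1 prime_mult)
lemma prime_ideal: "is_prime_ideal p \<Longrightarrow> is_ideal p" unfolding is_prime_ideal_def by blast

lemma lin_mult: "y = i + c * x \<Longrightarrow> d * y = d * i + (d * c) * (x::'a::comm_ring_1)"
  by (simp add: distrib_left mult.assoc)

lemma prod_expand: "A = i + c * x \<Longrightarrow> B = i' + c' * y \<Longrightarrow>
   A * B = i * i' + (i * (c' * y) + (c * x) * i' + (c * c') * (x * (y::'a::comm_ring_1)))"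
  by (simp add: algebra_simps)

lemma memQ: "i \<in> Q \<Longrightarrow> i + c * x \<in> {i + c * x | i c. i \<in> Q}" 
  unfolding mem_Collect_eq by (rule exI[of _ i], rule exI[of _ c]) simp

lemma prime_avoid:
  fixes a :: "'a::comm_ring_1"
  assumes J: "is_ideal J" and na: "\<forall>n. a^n \<notin> J"
  shows "\<exists>q. is_prime_ideal q \<and> J \<subseteq> q \<and> a \<notin> q"
proof -
  let ?A = "{Q. is_ideal Q \<and> J \<subseteq> Q \<and> (\<forall>n. a^n \<notin> Q)}"
  have "\<exists>Q\<in>?A. \<forall>X\<in>?A. Q \<subseteq> X \<longrightarrow> X = Q"
  proof (rule subset_Zorn_nonempty)
    show "?A \<noteq> {}" using assms by (auto intro!: exI[of _ J])
    fix C assume C: "C \<noteq> {}" "subset.chain ?A C"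
    then have CA: "C \<subseteq> ?A" and ch: "\<forall>X\<in>C. \<forall>Y\<in>C. X \<subseteq> Y \<or> Y \<subseteq> X"
      by (auto simp: subset_chain_def)
    obtain X0 where X0: "X0 \<in> C" using C by blast
    have "is_ideal (\<Union>C)"
      unfolding is_ideal_iff
    proof (intro conjI ballI allI)
      show "0 \<in> \<Union>C" using X0 CA by (auto intro: ideal_0)
    next
      fix x y assume "x \<in> \<Union>C" "y \<in> \<Union>C"
      then obtain X Y where "X \<in> C" "Y \<in> C" "x \<in> X" "y \<in> Y" by blast
      then have "X \<subseteq> Y \<or> Y \<subseteq> X" using ch by blast
      then show "x + y \<in> \<Union>C"
      proof
        assume "X \<subseteq> Y"
        then have "x + y \<in> Y" using \<open>Y \<in> C\<close> CA \<open>x \<in> X\<close> \<open>y \<in> Y\<close> ideal_add by blast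
        then show ?thesis using \<open>Y \<in> C\<close> by blast
      next
        assume "Y \<subseteq> X"
        then have "x + y \<in> X" using \<open>X \<in> C\<close> CA \<open>x \<in> X\<close> \<open>y \<in> Y\<close> ideal_add by blast
        then show ?thesis using \<open>X \<in> C\<close> by blast
      qed
    next
      fix c x assume "x \<in> \<Union>C"
      then show "c * x \<in> \<Union>C" using CA by (auto intro: ideal_multL)
    qed
    moreover have "J \<subseteq> \<Union>C" using X0 CA by blast
    moreover have "\<forall>n. a^n \<notin> \<Union>C" using CA by blast
    ultimately show "\<Union>C \<in> ?A" by blast
  qed
  then obtain Q where QA: "Q \<in> ?A" and Qmax: "\<forall>X\<in>?A. Q \<subseteq> X \<longrightarrow> X = Q" by blast
  have Qi: "is_ideal Q" using QA by blast
  have ext: "\<exists>n. a^n \<in> {i + c * x | i c. i \<in> Q}" if "x \<notin> Q" for x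
  proof -
    let ?Q' = "{i + c * x | i c. i \<in> Q}"
    have "is_ideal ?Q'" unfolding is_ideal_iff
    proof (intro conjI ballI allI)
      show "0 \<in> ?Q'" using memQ[of 0 Q 0 x] ideal_0[OF Qi] by simp
    next
      fix y z assume "y \<in> ?Q'" "z \<in> ?Q'"
      then obtain i c i' c' where "y = i + c * x" "z = i' + c' * x" "i \<in> Q" "i' \<in> Q" by blast
      then have e: "y + z = (i + i') + (c + c') * x" by (simp add: distrib_right)
      have "i + i' \<in> Q" using Qi \<open>i \<in> Q\<close> \<open>i' \<in> Q\<close> by (rule ideal_add)
      then show "y + z \<in> ?Q'" unfolding e by (rule memQ)
    next
      fix d y assume "y \<in> ?Q'"
      then obtain i c where "y = i + c * x" "i \<in> Q" by blast
      have e: "d * y = d * i + (d * c) * x" using \<open>y = i + c * x\<close> by (rule lin_mult)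
      have "d * i \<in> Q" using Qi \<open>i \<in> Q\<close> by (rule ideal_multL)
      then show "d * y \<in> ?Q'" unfolding e by (rule memQ)
    qed
    moreover have QQ: "Q \<subseteq> ?Q'"
    proof
      fix y assume "y \<in> Q"
      then show "y \<in> ?Q'" using memQ[of y Q 0 x] by simp
    qed
    moreover have "x \<in> ?Q'"
    proof -
      show ?thesis using memQ[of 0 Q 1 x] ideal_0[OF Qi] by simp
    qed
    ultimately have "is_ideal ?Q'" "J \<subseteq> ?Q'" "x \<in> ?Q'" using QA by blast+
    show ?thesis
    proof (rule ccontr)
      assume "\<not> ?thesis"
      then have "?Q' \<in> ?A" using \<open>is_ideal ?Q'\<close> \<open>J \<subseteq> ?Q'\<close> by blast
      then have "?Q' = Q" using Qmax QQ by blast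
      then show False using \<open>x \<in> ?Q'\<close> that by blast
    qed
  qed
  have "is_prime_ideal Q" unfolding is_prime_ideal_def
  proof (intro conjI allI impI)
    show "is_ideal Q" by fact
    show "Q \<noteq> UNIV"
    proof
      assume "Q = UNIV" then have "a^0 \<in> Q" by simp
      then show False using QA by blast
    qed
    fix x y assume xy: "x * y \<in> Q"
    show "x \<in> Q \<or> y \<in> Q"
    proof (rule ccontr)
      assume "\<not> (x \<in> Q \<or> y \<in> Q)"
      then have nx: "x \<notin> Q" and ny: "y \<notin> Q" by auto
      obtain n where "a^n \<in> {i + c * x | i c. i \<in> Q}" using ext[OF nx] by blast
      then obtain i c where e1: "a^n = i + c * x" and "i \<in> Q" by blast
      obtain m where "a^m \<in> {i + c * y | i c. i \<in> Q}" using ext[OF ny] by blast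
      then obtain i' c' where e2: "a^m = i' + c' * y" and "i' \<in> Q" by blast
      have "a^(n+m) = i * i' + (i * (c' * y) + (c * x) * i' + (c * c') * (x * y))"
        unfolding power_add by (rule prod_expand[OF e1 e2])
      also have "\<dots> \<in> Q" using Qi xy \<open>i \<in> Q\<close> \<open>i' \<in> Q\<close>
        by (meson ideal_add ideal_multL ideal_multR)
      finally show False using QA by blast
    qed
  qed
  moreover have "a \<notin> Q"
  proof -
    have "a^1 \<notin> Q" using QA by blast
    then show ?thesis by simp
  qed
  moreover have "J \<subseteq> Q" using QA by simp
  ultimately show ?thesis by (intro exI[of _ Q] conjI)
qed

lemma radical:
  fixes a :: "'a::comm_ring_1"
  assumes "is_ideal J" "\<And>q. is_prime_ideal q \<Longrightarrow> a \<notin> q \<Longrightarrow> \<not> J \<subseteq> q"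
  shows "\<exists>e. a^e \<in> J"
proof (rule ccontr)
  assume "\<not> ?thesis"
  then have "\<forall>n. a^n \<notin> J" by blast
  then obtain q where "is_prime_ideal q" "J \<subseteq> q" "a \<notin> q" using prime_avoid[OF assms(1)] by blast
  then show False using assms(2) by blast
qed



context module
begin

lemma eq0_iff: "u *s (a *s x - b *s y) = 0 \<longleftrightarrow> (u * a) *s x = (u * b) *s y"
  by (simp add: scale_right_diff_distrib)

lemma ann_ideal: "is_ideal {u. u *s w = 0}"
  unfolding is_ideal_iff
  by (auto simp: scale_left_distrib) (metis scale_scale scale_zero_right)

lemma LZ:
  assumes "\<And>q. is_prime_ideal q \<Longrightarrow> f \<notin> q \<Longrightarrow> \<exists>u. u \<notin> q \<and> u *s w = 0"
  shows "\<exists>t. f^t *s w = 0"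
proof -
  have "\<exists>t. f^t \<in> {u. u *s w = 0}"
  proof (rule radical[OF ann_ideal])
    fix q assume "is_prime_ideal q" "f \<notin> q"
    then obtain u where "u \<notin> q" "u *s w = 0" using assms by blast
    then show "\<not> {u. u *s w = 0} \<subseteq> q" by blast
  qed
  then show ?thesis by simp
qed

lemma pow_kill_mono: "f^t *s w = 0 \<Longrightarrow> t \<le> t' \<Longrightarrow> f^t' *s w = 0"
proof -
  assume "f^t *s w = 0" "t \<le> t'"
  then have "f^t' = f^(t'-t) * f^t" by (simp add: power_add[symmetric])
  then show ?thesis using \<open>f^t *s w = 0\<close> by (metis scale_scale scale_zero_right)
qed

lemma frac_mem: "(n', s') \<in> frac scale p n s \<longleftrightarrow> s' \<notin> p \<and> (\<exists>u. u \<notin> p \<and> (u * s') *s n = (u * s) *s n')"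
  by (simp add: frac_def eq0_iff)

lemma frac_trans:
  assumes p: "is_prime_ideal p" and "u \<notin> p" "s \<notin> p" "v \<notin> p"
    and A: "(u * s') *s n = (u * s) *s n'" and B: "(v * t) *s n = (v * s) *s m"
  shows "(u * v * s) *s (t *s n' - s' *s m) = 0"
proof -
  have "(u * v * s * t) *s n' = (v * t) *s ((u * s) *s n')" by (simp add: mult_ac)
  also have "\<dots> = (v * t) *s ((u * s') *s n)" using A by simp
  also have "\<dots> = (u * s') *s ((v * t) *s n)" by (simp add: mult_ac)
  also have "\<dots> = (u * s') *s ((v * s) *s m)" using B by simp
  also have "\<dots> = (u * v * s * s') *s m" by (simp add: mult_ac)
  finally show ?thesis by (simp add: scale_right_diff_distrib mult_ac)
qed

lemma frac_eq:
  assumes p: "is_prime_ideal p" and s: "s \<notin> p" and s': "s' \<notin> p"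
  shows "frac scale p n s = frac scale p n' s' \<longleftrightarrow> (\<exists>u. u \<notin> p \<and> (u * s') *s n = (u * s) *s n')"
proof
  assume eq: "frac scale p n s = frac scale p n' s'"
  have "(n', s') \<in> frac scale p n' s'" unfolding frac_mem using s' prime_ideal_1[OF p]
    by (intro conjI exI[of _ 1]) auto
  then have "(n', s') \<in> frac scale p n s" using eq by simp
  then show "\<exists>u. u \<notin> p \<and> (u * s') *s n = (u * s) *s n'" unfolding frac_mem by blast
next
  assume "\<exists>u. u \<notin> p \<and> (u * s') *s n = (u * s) *s n'"
  then obtain u where u: "u \<notin> p" and A: "(u * s') *s n = (u * s) *s n'" by blast
  show "frac scale p n s = frac scale p n' s'"
  proof (rule set_eqI, clarify)
    fix m t
    show "(m, t) \<in> frac scale p n s \<longleftrightarrow> (m, t) \<in> frac scale p n' s'"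
    proof
      assume "(m, t) \<in> frac scale p n s"
      then obtain v where t: "t \<notin> p" and v: "v \<notin> p" and B: "(v * t) *s n = (v * s) *s m"
        by (auto simp: frac_mem)
      have "(u * v * s) *s (t *s n' - s' *s m) = 0" by (rule frac_trans[OF p u s v A B])
      moreover have "u * v * s \<notin> p" using p u v s by (simp add: prime_mult)
      ultimately show "(m, t) \<in> frac scale p n' s'" using t by (auto simp: frac_mem eq0_iff)
    next
      assume "(m, t) \<in> frac scale p n' s'"
      then obtain v where t: "t \<notin> p" and v: "v \<notin> p" and B: "(v * t) *s n' = (v * s') *s m"
        by (auto simp: frac_mem)
      have A': "(u * s) *s n' = (u * s') *s n" using A by simp
      have "(u * v * s') *s (t *s n - s *s m) = 0" by (rule frac_trans[OF p u s' v A' B])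
      moreover have "u * v * s' \<notin> p" using p u v s' by (simp add: prime_mult)
      ultimately show "(m, t) \<in> frac scale p n s" using t by (auto simp: frac_mem eq0_iff)
    qed
  qed
qed

lemma frac_scale_eq:
  assumes p: "is_prime_ideal p" and s: "s \<notin> p" and c: "c \<notin> p"
  shows "frac scale p n s = frac scale p (c *s n) (c * s)"
proof -
  have cs: "c * s \<notin> p" using prime_mult[OF p c s] .
  show ?thesis unfolding frac_eq[OF p s cs]
    using prime_ideal_1[OF p] by (intro exI[of _ 1]) (simp add: mult_ac)
qed

lemma prime_prodD: "is_prime_ideal p \<Longrightarrow> a * b \<notin> p \<Longrightarrow> a \<notin> p \<and> b \<notin> p"
  using prime_ideal ideal_multL ideal_multR by metis

lemma SEC:
  fixes d :: 'a and S :: "'a set set" and \<gamma> :: "'a set \<Rightarrow> ('b \<times> 'a) set"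
  assumes Hloc: "\<forall>p\<in>S. \<exists>n s c. c \<notin> p \<and> s \<notin> p \<and>
        (\<forall>q. is_prime_ideal q \<and> c \<notin> q \<and> s \<notin> q \<longrightarrow> q \<in> S \<and> \<gamma> q = frac scale q n s)"
    and Hd: "\<forall>q. is_prime_ideal q \<and> d \<notin> q \<longrightarrow> q \<in> S"
  shows "\<exists>x e. \<forall>p. is_prime_ideal p \<and> d \<notin> p \<longrightarrow> \<gamma> p = frac scale p x (d^e)"
proof -
  define G where "G = {(f, m). \<forall>p. is_prime_ideal p \<and> f \<notin> p \<longrightarrow> p \<in> S \<and> \<gamma> p = frac scale p m f}"
  have cover: "\<exists>f m. (f, m) \<in> G \<and> f \<notin> q" if q: "is_prime_ideal q" "d \<notin> q" for q
  proof -
    have "q \<in> S" using Hd q by blast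
    then obtain n s c where c: "c \<notin> q" and s: "s \<notin> q"
      and H: "\<forall>q. is_prime_ideal q \<and> c \<notin> q \<and> s \<notin> q \<longrightarrow> q \<in> S \<and> \<gamma> q = frac scale q n s"
      using Hloc[rule_format, OF \<open>q \<in> S\<close>] by (elim exE conjE) (rule that)
    have "(c * s, c *s n) \<in> G"
      unfolding G_def mem_Collect_eq case_prod_conv
    proof (intro allI impI)
      fix p assume p: "is_prime_ideal p \<and> c * s \<notin> p"
      then have "c \<notin> p" "s \<notin> p" using prime_prodD by blast+
      then show "p \<in> S \<and> \<gamma> p = frac scale p (c *s n) (c * s)"
        using H p frac_scale_eq by auto
    qed
    moreover have "c * s \<notin> q" using prime_mult q c s by blast
    ultimately show ?thesis by blast
  qed
  have J1: "is_ideal (Rm.span (fst ` G))" unfolding is_ideal_def by (rule Rm.subspace_span)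
  have "\<exists>e. d^e \<in> Rm.span (fst ` G)"
  proof (rule radical[OF J1])
    fix q assume "is_prime_ideal q" "d \<notin> q"
    then obtain f m where fm: "(f,m) \<in> G" "f \<notin> q" using cover by blast
    then have "f \<in> Rm.span (fst ` G)" by (intro Rm.span_base) (metis fst_conv image_eqI)
    then show "\<not> Rm.span (fst ` G) \<subseteq> q" using fm by blast
  qed
  then obtain e where "d^e \<in> Rm.span (fst ` G)" by blast
  then obtain t r where t: "finite t" "t \<subseteq> fst ` G" and sum1: "(\<Sum>a\<in>t. r a * a) = d^e"
    unfolding Rm.span_explicit mem_Collect_eq by (elim exE conjE) (rule that; simp)
  define mm where "mm f = (SOME m. (f, m) \<in> G)" for f :: 'a
  have mmG: "(f, mm f) \<in> G" if "f \<in> t" for f :: 'a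
  proof -
    have "\<exists>m. (f, m) \<in> G" using t that by force
    then show ?thesis unfolding mm_def by (rule someI_ex)
  qed
  have mmP: "p \<in> S \<and> \<gamma> p = frac scale p (mm f) f" if "f \<in> t" "is_prime_ideal p" "f \<notin> p" for f p
    using mmG[OF that(1)] that(2,3) unfolding G_def by auto
  have kill: "\<exists>k. (f*g)^k *s (g *s mm f - f *s mm g) = 0" if fg: "f\<in>t" "g\<in>t" for f g :: 'a
  proof (rule LZ)
    fix p assume p: "is_prime_ideal p" "f * g \<notin> p"
    then have fp: "f \<notin> p" "g \<notin> p" using prime_prodD by blast+
    have "frac scale p (mm f) f = frac scale p (mm g) g" using mmP fg p fp by metis
    then obtain u where "u \<notin> p" "(u * g) *s mm f = (u * f) *s mm g" using frac_eq[OF p(1) fp] by blast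
    then show "\<exists>u. u \<notin> p \<and> u *s (g *s mm f - f *s mm g) = 0" by (auto simp: eq0_iff)
  qed
  define kk where "kk f g = (SOME k. (f*g)^k *s (g *s mm f - f *s mm g) = 0)" for f g :: 'a
  have kk: "(f*g)^(kk f g) *s (g *s mm f - f *s mm g) = 0" if "f\<in>t" "g\<in>t" for f g :: 'a
    using kill[OF that] unfolding kk_def by (rule someI_ex)
  define K where "K = Max ((\<lambda>(f,g). kk f g) ` (t \<times> t))"
  have killK: "(f*g)^K *s (g *s mm f - f *s mm g) = 0" if "f\<in>t" "g\<in>t" for f g :: 'a
  proof (rule pow_kill_mono[OF kk[OF that]])
    show "kk f g \<le> K" unfolding K_def using t(1) that by (intro Max_ge) force+
  qed
  define gg where "gg f = f^(Suc K)" for f :: 'a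
  define hh where "hh f = f^K *s mm f" for f :: 'a
  have cross: "gg g *s hh f = gg f *s hh g" if "f\<in>t" "g\<in>t" for f g :: 'a
  proof -
    have "((f*g)^K * g) *s mm f = ((f*g)^K * f) *s mm g"
      using killK[OF that] by (simp add: eq0_iff)
    then show ?thesis unfolding gg_def hh_def by (simp add: power_mult_distrib mult_ac)
  qed
  have hhP: "\<gamma> p = frac scale p (hh f) (gg f)" if "f\<in>t" "is_prime_ideal p" "f \<notin> p" for f p
  proof -
    have g: "gg f \<notin> p" unfolding gg_def using prime_pow[OF that(2,3)] .
    have "\<gamma> p = frac scale p (mm f) f" using mmP[OF that] by blast
    also have "\<dots> = frac scale p (hh f) (gg f)"
      unfolding frac_eq[OF that(2) that(3) g] using prime_ideal_1[OF that(2)]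
      by (intro exI[of _ 1]) (simp add: gg_def hh_def mult_ac)
    finally show ?thesis .
  qed
  have J2: "is_ideal (Rm.span (gg ` t))" unfolding is_ideal_def by (rule Rm.subspace_span)
  have "\<exists>e'. d^e' \<in> Rm.span (gg ` t)"
  proof (rule radical[OF J2])
    fix q assume q: "is_prime_ideal q" "d \<notin> q"
    have "d^e \<notin> q" using prime_pow[OF q] .
    then obtain f where f: "f \<in> t" "f \<notin> q"
    proof (cases "\<exists>f\<in>t. f \<notin> q")
      case False
      then have "(\<Sum>a\<in>t. r a * a) \<in> q" using prime_ideal[OF q(1)]
        by (intro ideal_sum) (auto intro: ideal_multL)
      then show ?thesis using sum1 \<open>d^e \<notin> q\<close> by simp
    qed blast
    have "gg f \<notin> q" unfolding gg_def using prime_pow[OF q(1) f(2)] .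
    moreover have "gg f \<in> Rm.span (gg ` t)" using f by (intro Rm.span_base) blast
    ultimately show "\<not> Rm.span (gg ` t) \<subseteq> q" by blast
  qed
  then obtain e' where "d^e' \<in> Rm.span (gg ` t)" by blast
  then obtain t' r' where t': "finite t'" "t' \<subseteq> gg ` t" and sum2: "(\<Sum>y\<in>t'. r' y * y) = d^e'"
    unfolding Rm.span_explicit mem_Collect_eq by (elim exE conjE) (rule that; simp)
  define ff where "ff y = inv_into t gg y" for y :: 'a
  have ff: "ff y \<in> t" "gg (ff y) = y" if "y \<in> t'" for y :: 'a
    using t'(2) that unfolding ff_def by (auto intro: inv_into_into f_inv_into_f)
  define x where "x = (\<Sum>y\<in>t'. r' y *s hh (ff y))"
  have key: "gg f0 *s x = d^e' *s hh f0" if f0: "f0 \<in> t" for f0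
  proof -
    have "gg f0 *s x = (\<Sum>y\<in>t'. r' y *s (gg f0 *s hh (ff y)))"
      unfolding x_def scale_sum_right by (rule sum.cong) (simp_all add: mult_ac)
    also have "\<dots> = (\<Sum>y\<in>t'. r' y *s (gg (ff y) *s hh f0))"
      by (rule sum.cong) (simp_all add: cross[OF ff(1) f0])
    also have "\<dots> = (\<Sum>y\<in>t'. (r' y * y) *s hh f0)"
      by (rule sum.cong) (simp_all add: ff)
    also have "\<dots> = d^e' *s hh f0" unfolding sum2[symmetric] scale_sum_left ..
    finally show ?thesis .
  qed
  show ?thesis
  proof (intro exI[of _ x] exI[of _ e'] allI impI)
    fix p assume "is_prime_ideal p \<and> d \<notin> p"
    then have p: "is_prime_ideal p" "d \<notin> p" by auto
    have de: "d^e' \<notin> p" using prime_pow[OF p] .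
    obtain y where y: "y \<in> t'" "y \<notin> p"
    proof (cases "\<exists>y\<in>t'. y \<notin> p")
      case False
      then have "(\<Sum>y\<in>t'. r' y * y) \<in> p" using prime_ideal[OF p(1)]
        by (intro ideal_sum) (auto intro: ideal_multL)
      then show ?thesis using sum2 de by simp
    qed blast
    have f: "ff y \<in> t" "gg (ff y) \<notin> p" using ff y by auto
    have f2: "ff y \<notin> p"
    proof
      assume "ff y \<in> p"
      then have "ff y * (ff y)^K \<in> p" by (rule ideal_multR[OF prime_ideal[OF p(1)]])
      then show False using f(2) unfolding gg_def by simp
    qed
    have "\<gamma> p = frac scale p (hh (ff y)) (gg (ff y))" using hhP[OF f(1) p(1) f2] .
    also have "\<dots> = frac scale p x (d^e')"
      unfolding frac_eq[OF p(1) f(2) de] using prime_ideal_1[OF p(1)] key[OF f(1)]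
      by (intro exI[of _ 1]) simp
    finally show "\<gamma> p = frac scale p x (d^e')" .
  qed
qed

end


context module
begin

lemma reg_pow:
  assumes ra: "\<forall>x. a *s x = 0 \<longrightarrow> x = 0"
  shows "a^t *s x = 0 \<Longrightarrow> x = 0"
proof (induct t arbitrary: x)
  case 0 then show ?case by simp
next
  case (Suc t)
  have "a^t *s (a *s x) = 0" using Suc.prems by (simp add: mult_ac)
  then have "a *s x = 0" by (rule Suc.hyps)
  then show ?case using ra by blast
qed

lemma regb_pow1:
  assumes rb: "\<forall>x. b *s x \<in> range (scale a) \<longrightarrow> x \<in> range (scale a)"
  shows "b^r *s z \<in> range (scale a) \<Longrightarrow> z \<in> range (scale a)"
proof (induct r arbitrary: z)
  case 0 then show ?case by simp
next
  case (Suc r)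
  have "b^r *s (b *s z) \<in> range (scale a)" using Suc.prems by (simp add: mult_ac)
  then have "b *s z \<in> range (scale a)" by (rule Suc.hyps)
  then show ?case using rb by blast
qed

lemma regb_pow:
  assumes ra: "\<forall>x. a *s x = 0 \<longrightarrow> x = 0"
    and rb: "\<forall>x. b *s x \<in> range (scale a) \<longrightarrow> x \<in> range (scale a)"
  shows "b^r *s z \<in> range (scale (a^k)) \<Longrightarrow> z \<in> range (scale (a^k))"
proof (induct k arbitrary: z)
  case 0 then show ?case by simp
next
  case (Suc k)
  from Suc.prems obtain w where w: "b^r *s z = scale (a^(Suc k)) w" by (rule rangeE)
  have w2: "b^r *s z = a *s (a^k *s w)" using w by simp
  have "b^r *s z \<in> range (scale a)" unfolding w2 by (rule rangeI)
  then have "z \<in> range (scale a)" by (rule regb_pow1[OF rb])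
  then obtain z' where z': "z = a *s z'" by (rule rangeE)
  have "a *s (b^r *s z') = b^r *s z" unfolding z' by (simp add: mult.commute)
  also have "\<dots> = a *s (a^k *s w)" by (rule w2)
  finally have e: "a *s (b^r *s z') = a *s (a^k *s w)" .
  have "a *s (b^r *s z' - a^k *s w) = 0" unfolding scale_right_diff_distrib e by simp
  then have "b^r *s z' - a^k *s w = 0" using ra by blast
  then have "b^r *s z' = a^k *s w" by simp
  then have "b^r *s z' \<in> range (scale (a^k))" by simp
  then have "z' \<in> range (scale (a^k))" by (rule Suc.hyps)
  then obtain z'' where z'': "z' = a^k *s z''" by (rule rangeE)
  have "z = a^(Suc k) *s z''" unfolding z' z'' by simp
  then show ?case by (rule ssubst) (rule rangeI)
qed

lemma MAIN_N:
  fixes S :: "'a set set" and \<gamma> :: "'a set \<Rightarrow> ('b \<times> 'a) set"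
  assumes Hloc: "\<forall>p\<in>S. \<exists>n s c. c \<notin> p \<and> s \<notin> p \<and>
        (\<forall>q. is_prime_ideal q \<and> c \<notin> q \<and> s \<notin> q \<longrightarrow> q \<in> S \<and> \<gamma> q = frac scale q n s)"
    and HS: "\<forall>p\<in>S. is_prime_ideal p"
    and Ha: "\<forall>q. is_prime_ideal q \<and> a \<notin> q \<longrightarrow> q \<in> S"
    and Hb: "\<forall>q. is_prime_ideal q \<and> b \<notin> q \<longrightarrow> q \<in> S"
    and ra: "\<forall>x. a *s x = 0 \<longrightarrow> x = 0"
    and rb: "\<forall>x. b *s x \<in> range (scale a) \<longrightarrow> x \<in> range (scale a)"
  shows "\<exists>z. \<forall>p\<in>S. \<gamma> p = frac scale p z 1"
proof -
  obtain x k where xk: "\<forall>p. is_prime_ideal p \<and> a \<notin> p \<longrightarrow> \<gamma> p = frac scale p x (a^k)"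
    using SEC[OF Hloc Ha] by blast
  obtain y l where yl: "\<forall>p. is_prime_ideal p \<and> b \<notin> p \<longrightarrow> \<gamma> p = frac scale p y (b^l)"
    using SEC[OF Hloc Hb] by blast
  have "\<exists>t. (a*b)^t *s (b^l *s x - a^k *s y) = 0"
  proof (rule LZ)
    fix p assume p: "is_prime_ideal p" "a * b \<notin> p"
    then have ab: "a \<notin> p" "b \<notin> p" using prime_prodD by blast+
    have "frac scale p x (a^k) = frac scale p y (b^l)" using xk yl p ab by metis
    then obtain u where "u \<notin> p" "(u * b^l) *s x = (u * a^k) *s y"
      using frac_eq[OF p(1) prime_pow[OF p(1) ab(1)] prime_pow[OF p(1) ab(2)]] by blast
    then show "\<exists>u. u \<notin> p \<and> u *s (b^l *s x - a^k *s y) = 0" by (auto simp: eq0_iff)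
  qed
  then obtain t where "(a*b)^t *s (b^l *s x - a^k *s y) = 0" by blast
  then have "a^t *s (b^t *s (b^l *s x - a^k *s y)) = 0" by (simp add: power_mult_distrib)
  then have "b^t *s (b^l *s x - a^k *s y) = 0" by (rule reg_pow[OF ra])
  then have "b^(t+l) *s x = a^k *s (b^t *s y)"
    by (simp add: scale_right_diff_distrib power_add mult_ac)
  moreover have "a^k *s (b^t *s y) \<in> range (scale (a^k))" by (rule rangeI)
  ultimately have "x \<in> range (scale (a^k))" using regb_pow[OF ra rb, of "t+l" x k] by metis
  then obtain z0 where z0: "x = a^k *s z0" by blast
  have onA: "\<gamma> p = frac scale p z0 1" if p: "is_prime_ideal p" "a \<notin> p" for p
  proof -
    have ak: "a^k \<notin> p" using prime_pow[OF p] .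
    have "\<gamma> p = frac scale p x (a^k)" using xk p by blast
    also have "\<dots> = frac scale p z0 1"
      unfolding frac_eq[OF p(1) ak prime_ideal_1[OF p(1)]] z0 using prime_ideal_1[OF p(1)]
      by (intro exI[of _ 1]) simp
    finally show ?thesis .
  qed
  show ?thesis
  proof (intro exI[of _ z0] ballI)
    fix p assume "p \<in> S"
    then have p: "is_prime_ideal p" using HS by blast
    obtain n s c where c: "c \<notin> p" and s: "s \<notin> p"
      and H: "\<forall>q. is_prime_ideal q \<and> c \<notin> q \<and> s \<notin> q \<longrightarrow> q \<in> S \<and> \<gamma> q = frac scale q n s"
      using Hloc[rule_format, OF \<open>p \<in> S\<close>] by (elim exE conjE) (rule that)
    have "\<exists>t. (a * (s * c))^t *s (n - s *s z0) = 0"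
    proof (rule LZ)
      fix q assume q: "is_prime_ideal q" "a * (s * c) \<notin> q"
      then have "a \<notin> q" "s * c \<notin> q" using prime_prodD by blast+
      then have aq: "a \<notin> q" and sq: "s \<notin> q" and cq: "c \<notin> q" using prime_prodD[OF q(1)] by blast+
      have "frac scale q n s = frac scale q z0 1" using H onA q aq sq cq by metis
      then obtain u where "u \<notin> q" "(u * 1) *s n = (u * s) *s z0"
        using frac_eq[OF q(1) sq prime_ideal_1[OF q(1)]] by blast
      then show "\<exists>u. u \<notin> q \<and> u *s (n - s *s z0) = 0"
        by (auto simp: scale_right_diff_distrib)
    qed
    then obtain t where "(a * (s * c))^t *s (n - s *s z0) = 0" by blast
    then have "a^t *s ((s * c)^t *s (n - s *s z0)) = 0" by (simp add: power_mult_distrib)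
    then have kill: "(s * c)^t *s (n - s *s z0) = 0" by (rule reg_pow[OF ra])
    have u: "(s * c)^t \<notin> p" using prime_pow[OF p prime_mult[OF p s c]] .
    have "\<gamma> p = frac scale p n s" using H p c s \<open>p \<in> S\<close> by blast
    also have "\<dots> = frac scale p z0 1"
      unfolding frac_eq[OF p s prime_ideal_1[OF p]] using u kill
      by (intro exI[of _ "(s * c)^t"]) (simp add: scale_right_diff_distrib)
    finally show "\<gamma> p = frac scale p z0 1" .
  qed
qed

lemma INJ_N:
  assumes ra: "\<forall>x. a *s x = 0 \<longrightarrow> x = 0"
    and H: "\<forall>p. is_prime_ideal p \<and> a \<notin> p \<longrightarrow> frac scale p x 1 = frac scale p y 1"
  shows "x = y"
proof -
  have "\<exists>t. a^t *s (x - y) = 0"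
  proof (rule LZ)
    fix p assume p: "is_prime_ideal p" "a \<notin> p"
    then have "frac scale p x 1 = frac scale p y 1" using H by blast
    then obtain u where "u \<notin> p" "(u * 1) *s x = (u * 1) *s y"
      using frac_eq[OF p(1) prime_ideal_1[OF p(1)] prime_ideal_1[OF p(1)]] by blast
    then show "\<exists>u. u \<notin> p \<and> u *s (x - y) = 0" by (auto simp: scale_right_diff_distrib)
  qed
  then obtain t where "a^t *s (x - y) = 0" by blast
  then have "x - y = 0" by (rule reg_pow[OF ra])
  then show ?thesis by simp
qed

lemma loc_add_frac1:
  assumes p: "is_prime_ideal p"
  shows "loc_add scale p (frac scale p x 1) (frac scale p y 1) = frac scale p (x + y) 1"
  unfolding loc_add_def
proof (rule the_equality)
  have "1 \<notin> p" using prime_ideal_1[OF p] .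
  then show "\<exists>n s n' s'. s \<notin> p \<and> s' \<notin> p \<and> frac scale p x 1 = frac scale p n s \<and>
      frac scale p y 1 = frac scale p n' s' \<and> frac scale p (x + y) 1 = frac scale p (s' *s n + s *s n') (s * s')"
    by (intro exI[of _ x] exI[of _ 1] exI[of _ y] exI[of _ 1]) simp
next
  fix e assume "\<exists>n s n' s'. s \<notin> p \<and> s' \<notin> p \<and> frac scale p x 1 = frac scale p n s \<and>
      frac scale p y 1 = frac scale p n' s' \<and> e = frac scale p (s' *s n + s *s n') (s * s')"
  then obtain n s n' s' where s: "s \<notin> p" and s': "s' \<notin> p" and e1: "frac scale p x 1 = frac scale p n s"
    and e2: "frac scale p y 1 = frac scale p n' s'" and e: "e = frac scale p (s' *s n + s *s n') (s * s')"
    by blast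
  have one: "1 \<notin> p" using prime_ideal_1[OF p] .
  obtain u where u: "u \<notin> p" "(u * s) *s x = u *s n"
    using e1 frac_eq[OF p one s] by auto
  obtain v where v: "v \<notin> p" "(v * s') *s y = v *s n'"
    using e2 frac_eq[OF p one s'] by auto
  have ss: "s * s' \<notin> p" using prime_mult[OF p s s'] .
  have "(u * v) *s (s' *s n + s *s n') = (v * s') *s (u *s n) + (u * s) *s (v *s n')"
    by (simp add: scale_right_distrib mult_ac)
  also have "\<dots> = (v * s') *s ((u * s) *s x) + (u * s) *s ((v * s') *s y)" using u v by simp
  also have "\<dots> = (u * v * (s * s')) *s (x + y)" by (simp add: scale_right_distrib mult_ac)
  finally have eq: "(u * v) *s (s' *s n + s *s n') = (u * v * (s * s')) *s (x + y)" .
  show "e = frac scale p (x + y) 1"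
    unfolding e frac_eq[OF p ss one] using eq prime_mult[OF p u(1) v(1)]
    by (intro exI[of _ "u * v"]) simp
qed

lemma loc_smult_frac1:
  assumes p: "is_prime_ideal p"
  shows "loc_smult scale p r (frac scale p x 1) = frac scale p (r *s x) 1"
  unfolding loc_smult_def
proof (rule the_equality)
  have "1 \<notin> p" using prime_ideal_1[OF p] .
  then show "\<exists>n s. s \<notin> p \<and> frac scale p x 1 = frac scale p n s \<and> frac scale p (r *s x) 1 = frac scale p (r *s n) s"
    by (intro exI[of _ x] exI[of _ 1]) simp
next
  fix e assume "\<exists>n s. s \<notin> p \<and> frac scale p x 1 = frac scale p n s \<and> e = frac scale p (r *s n) s"
  then obtain n s where s: "s \<notin> p" and e1: "frac scale p x 1 = frac scale p n s"
    and e: "e = frac scale p (r *s n) s" by blast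
  have one: "1 \<notin> p" using prime_ideal_1[OF p] .
  obtain u where u: "u \<notin> p" "(u * s) *s x = u *s n"
    using e1 frac_eq[OF p one s] by auto
  have "u *s (r *s n) = r *s (u *s n)" by (simp add: mult_ac)
  also have "\<dots> = r *s ((u * s) *s x)" using u by simp
  finally have eq: "u *s (r *s n) = (u * s) *s (r *s x)" by (simp add: mult_ac)
  show "e = frac scale p (r *s x) 1"
    unfolding e frac_eq[OF p s one] using eq u(1)
    by (intro exI[of _ u]) simp
qed

end


lemma colon_prime:
  fixes sM :: "'r::comm_ring_1 \<Rightarrow> 'm::ab_group_add \<Rightarrow> 'm"
  assumes mod: "module sM" and P: "P \<in> mSpec sM"
  shows "is_prime_ideal (colon sM P)"
proof -
  interpret M: module sM by (rule mod)
  have Psub: "M.subspace P" and PU: "P \<noteq> UNIV"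
    and Pp: "\<forall>r m. sM r m \<in> P \<longrightarrow> r \<in> colon sM P \<or> m \<in> P"
    using P unfolding mSpec_def prime_submodule_def by auto
  have id: "is_ideal (colon sM P)" unfolding is_ideal_iff
  proof (intro conjI ballI allI)
    show "0 \<in> colon sM P" unfolding colon_def using M.subspace_0[OF Psub] by simp
  next
    fix x y assume "x \<in> colon sM P" "y \<in> colon sM P"
    then have "\<forall>m. sM x m \<in> P" "\<forall>m. sM y m \<in> P" unfolding colon_def by auto
    then show "x + y \<in> colon sM P" unfolding colon_def
      using M.subspace_add[OF Psub] by (simp add: M.scale_left_distrib)
  next
    fix c x assume "x \<in> colon sM P"
    then have "\<forall>m. sM x m \<in> P" unfolding colon_def by auto
    then have "\<forall>m. sM c (sM x m) \<in> P" using M.subspace_scale[OF Psub] by blast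
    then show "c * x \<in> colon sM P" unfolding colon_def by simp
  qed
  have nU: "colon sM P \<noteq> UNIV"
  proof
    assume "colon sM P = UNIV"
    then have "1 \<in> colon sM P" by simp
    then have "\<forall>m. sM 1 m \<in> P" unfolding colon_def by simp
    then have "P = UNIV" by auto
    then show False using PU by blast
  qed
  have pr: "\<forall>x y. x * y \<in> colon sM P \<longrightarrow> x \<in> colon sM P \<or> y \<in> colon sM P"
  proof (intro allI impI)
    fix x y assume xy: "x * y \<in> colon sM P"
    show "x \<in> colon sM P \<or> y \<in> colon sM P"
    proof (cases "x \<in> colon sM P")
      case False
      have "sM y m \<in> P" for m
      proof -
        have "sM x (sM y m) \<in> P" using xy unfolding colon_def by simp
        then show ?thesis using Pp False by blast
      qed
      then show ?thesis unfolding colon_def by blast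
    qed blast
  qed
  show ?thesis unfolding is_prime_ideal_def using id nU pr by blast
qed

lemma realize:
  fixes sM :: "'r::comm_ring_1 \<Rightarrow> 'm::ab_group_add \<Rightarrow> 'm"
  assumes mod: "module sM" and f: "faithful sM" and pf: "primeful sM" and ne: "mSpec sM \<noteq> {}"
    and q: "is_prime_ideal q"
  shows "\<exists>P\<in>mSpec sM. colon sM P = q"
proof -
  interpret M: module sM by (rule mod)
  have "(UNIV :: 'm set) \<noteq> {0}"
  proof
    assume U: "(UNIV::'m set) = {0}"
    obtain P where "P \<in> mSpec sM" using ne by blast
    then have "M.subspace P" "P \<noteq> UNIV" unfolding mSpec_def prime_submodule_def by auto
    then have "0 \<in> P" by (simp add: M.subspace_0)
    moreover have "\<forall>x::'m. x = 0" using U by (metis UNIV_I singletonD)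
    ultimately have "P = UNIV" by (metis UNIV_eq_I)
    then show False using \<open>P \<noteq> UNIV\<close> by blast
  qed
  moreover have "ann sM \<subseteq> q" using f ideal_0[OF prime_ideal[OF q]] unfolding faithful_def by auto
  ultimately show ?thesis using pf q unfolding primeful_def by blast
qed

lemma Supp_char:
  fixes sM :: "'r::comm_ring_1 \<Rightarrow> 'm::ab_group_add \<Rightarrow> 'm"
  assumes mod: "module sM" and f: "faithful sM" and pf: "primeful sM" and ne: "mSpec sM \<noteq> {}"
  shows "p \<in> Supp sM (mSpec sM - zV sM K) \<longleftrightarrow> is_prime_ideal p \<and> \<not> colon sM K \<subseteq> p"
proof
  assume "p \<in> Supp sM (mSpec sM - zV sM K)"
  then obtain P where P: "P \<in> mSpec sM" "P \<notin> zV sM K" and p: "p = colon sM P"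
    unfolding Supp_def by blast
  then show "is_prime_ideal p \<and> \<not> colon sM K \<subseteq> p"
    using colon_prime[OF mod P(1)] unfolding zV_def by blast
next
  assume "is_prime_ideal p \<and> \<not> colon sM K \<subseteq> p"
  then obtain P where P: "P \<in> mSpec sM" "colon sM P = p" and nK: "\<not> colon sM K \<subseteq> p"
    using realize[OF mod f pf ne] by blast
  then have "P \<in> mSpec sM - zV sM K" unfolding zV_def by blast
  then show "p \<in> Supp sM (mSpec sM - zV sM K)" unfolding Supp_def using P by blast
qed

lemma sections_loc:
  fixes sM :: "'r::comm_ring_1 \<Rightarrow> 'm::ab_group_add \<Rightarrow> 'm" and sN :: "'r \<Rightarrow> 'n::ab_group_add \<Rightarrow> 'n"
  assumes mod: "module sM" and f: "faithful sM" and pf: "primeful sM" and ne: "mSpec sM \<noteq> {}"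
    and g: "\<gamma> \<in> sections sM sN U"
  shows "\<forall>p\<in>Supp sM U. \<exists>n s c. c \<notin> p \<and> s \<notin> p \<and>
        (\<forall>q. is_prime_ideal q \<and> c \<notin> q \<and> s \<notin> q \<longrightarrow> q \<in> Supp sM U \<and> \<gamma> q = frac sN q n s)"
proof
  fix p assume "p \<in> Supp sM U"
  then obtain Q where Q: "Q \<in> U" and p: "p = colon sM Q" unfolding Supp_def by blast
  have "\<exists>W. zopen sM W \<and> W \<subseteq> U \<and> Q \<in> W \<and>
       (\<exists>s n. \<forall>P\<in>W. s \<notin> colon sM P \<and> \<gamma> (colon sM P) = frac sN (colon sM P) n s)"
    using g Q unfolding sections_def by blast
  then obtain W s n where W: "zopen sM W" "W \<subseteq> U" "Q \<in> W"
    and Hs: "\<forall>P\<in>W. s \<notin> colon sM P \<and> \<gamma> (colon sM P) = frac sN (colon sM P) n s"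
    by blast
  obtain L where L: "W = mSpec sM - zV sM L" using W(1) unfolding zopen_def by blast
  have "\<not> colon sM L \<subseteq> colon sM Q" using W(3) unfolding L zV_def by blast
  then obtain c where c: "c \<in> colon sM L" "c \<notin> p" unfolding p by blast
  have s: "s \<notin> p" using Hs W(3) p by blast
  have "\<forall>q. is_prime_ideal q \<and> c \<notin> q \<and> s \<notin> q \<longrightarrow> q \<in> Supp sM U \<and> \<gamma> q = frac sN q n s"
  proof (intro allI impI)
    fix q assume q: "is_prime_ideal q \<and> c \<notin> q \<and> s \<notin> q"
    then obtain P where P: "P \<in> mSpec sM" "colon sM P = q" using realize[OF mod f pf ne] by blast
    then have "P \<in> W" unfolding L zV_def using c(1) q by blast
    then show "q \<in> Supp sM U \<and> \<gamma> q = frac sN q n s"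
      using Hs W(2) P(2) unfolding Supp_def by blast
  qed
  then show "\<exists>n s c. c \<notin> p \<and> s \<notin> p \<and>
        (\<forall>q. is_prime_ideal q \<and> c \<notin> q \<and> s \<notin> q \<longrightarrow> q \<in> Supp sM U \<and> \<gamma> q = frac sN q n s)"
    using c(2) s by blast
qed

theorem corollary3p18:
  fixes sM :: "'r::comm_ring_1 \<Rightarrow> 'm::ab_group_add \<Rightarrow> 'm"
    and sN :: "'r \<Rightarrow> 'n::ab_group_add \<Rightarrow> 'n"
    and K :: "'m set" and a1 a2 :: 'r
  assumes "noetherian_ring TYPE('r)"
    and "module sM" and "module sN"
    and "faithful sM" and "primeful sM" and "mSpec sM \<noteq> {}"
    and "Modules.module.subspace sM K"
    and "a1 \<in> colon sM K" and "a2 \<in> colon sM K" and "N_sequence2 sN a1 a2"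
  shows "\<exists>\<phi>. bij_betw \<phi> (UNIV :: 'n set) (sections sM sN (mSpec sM - zV sM K)) \<and>
           (\<forall>x y. \<phi> (x + y) = sec_add sM sN (mSpec sM - zV sM K) (\<phi> x) (\<phi> y)) \<and>
           (\<forall>r x. \<phi> (sN r x) = sec_smult sM sN (mSpec sM - zV sM K) r (\<phi> x))"
proof -
  interpret N: module sN by (rule assms(3))
  define U where "U = mSpec sM - zV sM K"
  define S where "S = Supp sM U"
  have Schar: "p \<in> S \<longleftrightarrow> is_prime_ideal p \<and> \<not> colon sM K \<subseteq> p" for p
    unfolding S_def U_def by (rule Supp_char[OF assms(2,4,5,6)])
  have HS: "\<forall>p\<in>S. is_prime_ideal p" using Schar by blast
  have Ha: "\<forall>q. is_prime_ideal q \<and> a1 \<notin> q \<longrightarrow> q \<in> S" using Schar assms(8) by blast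
  have Hb: "\<forall>q. is_prime_ideal q \<and> a2 \<notin> q \<longrightarrow> q \<in> S" using Schar assms(9) by blast
  have ra: "\<forall>x. sN a1 x = 0 \<longrightarrow> x = 0"
    and rb: "\<forall>x. sN a2 x \<in> range (sN a1) \<longrightarrow> x \<in> range (sN a1)"
    using assms(10) unfolding N_sequence2_def by auto
  have one: "1 \<notin> p" if "p \<in> S" for p using HS prime_ideal_1 that by blast
  define \<phi> where "\<phi> x = restrict (\<lambda>p. frac sN p x 1) S" for x
  have secs: "\<phi> x \<in> sections sM sN U" for x
    unfolding sections_def mem_Collect_eq
  proof (intro conjI ballI)
    show "\<phi> x \<in> (\<Pi>\<^sub>E p\<in>Supp sM U. loc sN p)"
      unfolding \<phi>_def S_def[symmetric] restrict_PiE_iff loc_def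
    proof
      fix p assume "p \<in> S"
      then show "frac sN p x 1 \<in> {frac sN p n s |n s. s \<notin> p}" using one by blast
    qed
  next
    fix Q assume "Q \<in> U"
    have zo: "zopen sM U" unfolding zopen_def U_def using assms(7) by blast
    have "\<forall>P\<in>U. 1 \<notin> colon sM P \<and> \<phi> x (colon sM P) = frac sN (colon sM P) x 1"
    proof
      fix P assume "P \<in> U"
      then have "colon sM P \<in> S" unfolding S_def Supp_def by blast
      then show "1 \<notin> colon sM P \<and> \<phi> x (colon sM P) = frac sN (colon sM P) x 1"
        using one unfolding \<phi>_def by simp
    qed
    then show "\<exists>W. zopen sM W \<and> W \<subseteq> U \<and> Q \<in> W \<and>
       (\<exists>s n. \<forall>P\<in>W. s \<notin> colon sM P \<and> \<phi> x (colon sM P) = frac sN (colon sM P) n s)"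
      using zo \<open>Q \<in> U\<close> by blast
  qed
  have inj: "inj \<phi>"
  proof (rule injI)
    fix x y assume e: "\<phi> x = \<phi> y"
    show "x = y"
    proof (rule N.INJ_N[OF ra], intro allI impI)
      fix p assume "is_prime_ideal p \<and> a1 \<notin> p"
      then have "p \<in> S" using Ha by blast
      then show "frac sN p x 1 = frac sN p y 1" using fun_cong[OF e, of p] unfolding \<phi>_def by simp
    qed
  qed
  have surj: "\<gamma> \<in> range \<phi>" if g: "\<gamma> \<in> sections sM sN U" for \<gamma>
  proof -
    have Hloc: "\<forall>p\<in>S. \<exists>n s c. c \<notin> p \<and> s \<notin> p \<and>
        (\<forall>q. is_prime_ideal q \<and> c \<notin> q \<and> s \<notin> q \<longrightarrow> q \<in> S \<and> \<gamma> q = frac sN q n s)"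
      unfolding S_def by (rule sections_loc[OF assms(2,4,5,6) g])
    obtain z where z: "\<forall>p\<in>S. \<gamma> p = frac sN p z 1"
      using N.MAIN_N[OF Hloc HS Ha Hb ra rb] by blast
    have gP: "\<gamma> \<in> (\<Pi>\<^sub>E p\<in>S. loc sN p)" using g unfolding sections_def S_def by blast
    have "\<gamma> = \<phi> z"
    proof
      fix p show "\<gamma> p = \<phi> z p"
      proof (cases "p \<in> S")
        case True then show ?thesis using z unfolding \<phi>_def by simp
      next
        case False then show ?thesis using PiE_arb[OF gP False] unfolding \<phi>_def by simp
      qed
    qed
    then show ?thesis by blast
  qed
  have bij: "bij_betw \<phi> UNIV (sections sM sN U)"
    unfolding bij_betw_def using inj secs surj by blast
  have add: "\<phi> (x + y) = sec_add sM sN U (\<phi> x) (\<phi> y)" for x y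
  proof
    fix p show "\<phi> (x + y) p = sec_add sM sN U (\<phi> x) (\<phi> y) p"
    proof (cases "p \<in> S")
      case True
      then show ?thesis unfolding sec_add_def \<phi>_def S_def[symmetric]
        using N.loc_add_frac1[of p x y] HS by simp
    next
      case False then show ?thesis unfolding sec_add_def \<phi>_def S_def[symmetric] by simp
    qed
  qed
  have smult: "\<phi> (sN r x) = sec_smult sM sN U r (\<phi> x)" for r x
  proof
    fix p show "\<phi> (sN r x) p = sec_smult sM sN U r (\<phi> x) p"
    proof (cases "p \<in> S")
      case True
      then show ?thesis unfolding sec_smult_def \<phi>_def S_def[symmetric]
        using N.loc_smult_frac1[of p r x] HS by simp
    next
      case False then show ?thesis unfolding sec_smult_def \<phi>_def S_def[symmetric] by simp
    qed
  qed
  show ?thesis unfolding U_def[symmetric] using bij add smult by blast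
qed

end
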